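(* Let $p$ be a prime, $n=rk$, let $h:\mathbb{F}_{p^k}\to\mathbb{F}_{p^k}$ be an arbitrary mapping, and let $\gamma\in\mathbb{F}_{p^n}^*$ be an $(i,b)$-Frobenius translator of $f:\mathbb{F}_{p^n}\to\mathbb{F}_{p^k}$ (with $b\in\mathbb{F}_{p^k}$, $i\in\{0,\dots,k-1\}$). Let $L:\mathbb{F}_{p^n}\to\mathbb{F}_{p^n}$ be an $\mathbb{F}_{p^k}$-linear permutation. Then the mapping $$G(x)=L(x)^{p^i}+L(\gamma)^{p^i}\,h(f(x))$$ permutes $\mathbb{F}_{p^n}$ if and only if the mapping $g(u)=u+bh(u)$ permutes $\mathbb{F}_{p^k}$.
   Context: For $n=rk$, a function $f:\mathbb{F}_{p^n}\to\mathbb{F}_{p^k}$, an element $\gamma\in\mathbb{F}_{p^n}^*$, an element $b\in\mathbb{F}_{p^k}$ and $i\in\{0,\dots,k-1\}$, $\gamma$ is called an $(i,b)$-Frobenius translator of $f$ if $f(x+u\gamma)-f(x)=u^{p^i}b$ for all $x\in\mathbb{F}_{p^n}$ and all $u\in\mathbb{F}_{p^k}$. An $\mathbb{F}_{p^k}$-linear function on $\mathbb{F}_{p^n}$ is one of the form $L(x)=\sum_{j=0}^{r-1}\lambda_j x^{p^{kj}}$ with $\lambda_j\in\mathbb{F}_{p^n}$. *)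

theory Defs
  imports "HOL-Computational_Algebra.Primes"
begin

text \<open>The finite field F_{p^n} is modelled as a finite field type 'a with CARD('a) = p^n.
  The subfield F_{p^k} (for k dividing n) is the set of fixed points of x \<mapsto> x^(p^k).\<close>

definition subfield_pk :: "nat \<Rightarrow> nat \<Rightarrow> ('a::{field,finite}) set" where
  "subfield_pk p k = {x. x ^ (p ^ k) = x}"

definition frobenius_translator ::
  "nat \<Rightarrow> nat \<Rightarrow> ('a::{field,finite} \<Rightarrow> 'a) \<Rightarrow> 'a \<Rightarrow> nat \<Rightarrow> 'a \<Rightarrow> bool" where
  "frobenius_translator p k f \<gamma> i b \<longleftrightarrow>
     \<gamma> \<noteq> 0 \<and> b \<in> subfield_pk p k \<and> i < k \<and>
     (\<forall>x u. u \<in> subfield_pk p k \<longrightarrow> f (x + u * \<gamma>) - f x = u ^ (p ^ i) * b)"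

text \<open>F_{p^k}-linear functions on F_{p^n}, n = r k.\<close>
definition Fpk_linear :: "nat \<Rightarrow> nat \<Rightarrow> nat \<Rightarrow> ('a::{field,finite} \<Rightarrow> 'a) \<Rightarrow> bool" where
  "Fpk_linear p k r L \<longleftrightarrow>
     (\<exists>lam :: nat \<Rightarrow> 'a. \<forall>x. L x = (\<Sum>j<r. lam j * x ^ (p ^ (k * j))))"

end

theory Submission
  imports Defs "HOL-Number_Theory.Residues"
begin

lemma char_eq:
  assumes "prime p" "card (UNIV :: ('a::{field,finite}) set) = p ^ m"
  shows "CHAR('a) = p"
proof -
  have pc: "prime CHAR('a)"
    by (rule prime_CHAR_semidom, rule finite_imp_CHAR_pos) simp
  have "CHAR('a) dvd p ^ m" using CHAR_dvd_CARD[where 'a='a] assms(2) by simp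
  hence "CHAR('a) dvd p" using pc prime_dvd_power by blast
  thus ?thesis using pc assms(1) primes_dvd_imp_eq by blast
qed

lemma frob_add:
  assumes "CHAR('a::{field,finite}) = p" "prime p"
  shows "((x::'a) + y) ^ (p ^ m) = x ^ (p ^ m) + y ^ (p ^ m)"
  using assms freshmans_dream'[of "p ^ m"] by auto

lemma frob_diff:
  assumes "CHAR('a::{field,finite}) = p" "prime p"
  shows "((x::'a) - y) ^ (p ^ m) = x ^ (p ^ m) - y ^ (p ^ m)"
proof -
  have "x ^ (p ^ m) = ((x - y) + y) ^ (p ^ m)" by simp
  also have "\<dots> = (x - y) ^ (p ^ m) + y ^ (p ^ m)" using frob_add[OF assms] by blast
  finally show ?thesis by simp
qed

lemma frob_inj:
  assumes "CHAR('a::{field,finite}) = p" "prime p"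
  shows "inj (\<lambda>x::'a. x ^ (p ^ m))"
proof (rule injI)
  fix x y :: 'a assume "x ^ (p ^ m) = y ^ (p ^ m)"
  hence "(x - y) ^ (p ^ m) = 0" using frob_diff[OF assms] by simp
  thus "x = y" by simp
qed

theorem theorem3:
  fixes p r k i :: nat
    and f h L :: "'a::{field,finite} \<Rightarrow> 'a"
    and \<gamma> b :: 'a
  assumes "prime p"
    and "0 < r" and "0 < k"
    and "card (UNIV :: 'a set) = p ^ (r * k)"
    and "\<forall>x. f x \<in> subfield_pk p k"
    and "\<forall>u \<in> subfield_pk p k. h u \<in> subfield_pk p k"
    and "frobenius_translator p k f \<gamma> i b"
    and "Fpk_linear p k r L"
    and "bij L"
  shows "bij (\<lambda>x. L x ^ (p ^ i) + L \<gamma> ^ (p ^ i) * h (f x))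
         \<longleftrightarrow> bij_betw (\<lambda>u. u + b * h u) (subfield_pk p k) (subfield_pk p k)"
proof -
  note pr = assms(1)
  have ch: "CHAR('a) = p" using char_eq[OF pr assms(4)] .
  define S where "S = (subfield_pk p k :: 'a set)"
  define q where "q = p ^ i"
  have S_iff: "x \<in> S \<longleftrightarrow> x ^ (p ^ k) = x" for x unfolding S_def subfield_pk_def by simp
  have S_add: "x + y \<in> S" if "x \<in> S" "y \<in> S" for x y
    using that frob_add[OF ch pr, of x y k] by (simp add: S_iff)
  have S_diff: "x - y \<in> S" if "x \<in> S" "y \<in> S" for x y
    using that frob_diff[OF ch pr, of x y k] by (simp add: S_iff)
  have S_mult: "x * y \<in> S" if "x \<in> S" "y \<in> S" for x y
    using that by (simp add: S_iff power_mult_distrib)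
  have S_div: "x / y \<in> S" if "x \<in> S" "y \<in> S" for x y
    using that by (simp add: S_iff power_divide)
  have S_pow: "x ^ (p ^ (k * j)) = x" if "x \<in> S" for x j
  proof (induction j)
    case 0 then show ?case by simp
  next
    case (Suc j)
    have "x ^ (p ^ (k * Suc j)) = (x ^ (p ^ (k * j))) ^ (p ^ k)"
      by (metis mult_Suc_right power_add power_mult mult.commute)
    also have "\<dots> = x" using Suc that unfolding S_iff by simp
    finally show ?case .
  qed
  have S_frob: "x ^ q \<in> S" if "x \<in> S" for x
  proof -
    have "(x ^ q) ^ (p ^ k) = (x ^ (p ^ k)) ^ q" by (metis power_mult mult.commute)
    thus ?thesis using that by (simp add: S_iff)
  qed
  have finS: "finite S" by simp
  have frob_onto: "\<exists>c\<in>S. c ^ q = y" if "y \<in> S" for y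
  proof -
    have "inj_on (\<lambda>x. x ^ q) S" using frob_inj[OF ch pr, of i] unfolding q_def
      by (rule inj_on_subset) simp
    moreover have "(\<lambda>x. x ^ q) ` S \<subseteq> S" using S_frob by auto
    ultimately have "(\<lambda>x. x ^ q) ` S = S" using endo_inj_surj[OF finS] by blast
    thus ?thesis using that by (metis imageE)
  qed
  obtain lam :: "nat \<Rightarrow> 'a" where lam: "\<And>x. L x = (\<Sum>j<r. lam j * x ^ (p ^ (k * j)))"
    using assms(8) unfolding Fpk_linear_def by (elim exE) simp
  have L_lin: "L (x + c * y) = L x + c * L y" if "c \<in> S" for x y c
  proof -
    have "L (x + c * y) = (\<Sum>j<r. lam j * x ^ (p ^ (k * j)) + c * (lam j * y ^ (p ^ (k * j))))"
    proof -
      have "lam j * (x + c * y) ^ (p ^ (k * j)) = lam j * x ^ (p ^ (k * j)) + c * (lam j * y ^ (p ^ (k * j)))" for j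
      proof -
        have "(x + c * y) ^ (p ^ (k * j)) = x ^ (p ^ (k * j)) + (c * y) ^ (p ^ (k * j))"
          by (rule frob_add[OF ch pr])
        also have "(c * y) ^ (p ^ (k * j)) = c ^ (p ^ (k * j)) * y ^ (p ^ (k * j))"
          by (rule power_mult_distrib)
        also have "c ^ (p ^ (k * j)) = c" by (rule S_pow[OF that])
        finally show ?thesis by (simp only: distrib_left mult.left_commute)
      qed
      thus ?thesis unfolding lam by simp
    qed
    also have "\<dots> = L x + c * L y" unfolding lam by (simp add: sum.distrib sum_distrib_left)
    finally show ?thesis .
  qed
  have trans: "\<And>x u. u \<in> S \<Longrightarrow> f (x + u * \<gamma>) - f x = u ^ q * b"
    and bS: "b \<in> S"
    using assms(7) unfolding frobenius_translator_def S_def q_def by auto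
  have fS: "f x \<in> S" for x using assms(5) S_def by auto
  have hS: "h u \<in> S" if "u \<in> S" for u using assms(6) S_def that by auto
  define h' where "h' u = (SOME c. c \<in> S \<and> c ^ q = h u)" for u
  have h'p: "h' u \<in> S \<and> h' u ^ q = h u" if "u \<in> S" for u
    unfolding h'_def by (rule someI_ex) (use frob_onto[OF hS[OF that]] in blast)
  define F where "F x = x + h' (f x) * \<gamma>" for x
  have fF: "f (F x) = f x + b * h (f x)" for x
    using trans[of "h' (f x)" x] h'p[OF fS[of x]] unfolding F_def by (simp add: algebra_simps)
  have GF: "L x ^ q + L \<gamma> ^ q * h (f x) = (L (F x)) ^ q" for x
  proof -
    have "L (F x) = L x + h' (f x) * L \<gamma>" unfolding F_def using L_lin h'p[OF fS[of x]]
      by (metis mult.commute)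
    hence "L (F x) ^ q = L x ^ q + h' (f x) ^ q * L \<gamma> ^ q"
      unfolding q_def by (simp add: frob_add[OF ch pr] power_mult_distrib)
    thus ?thesis using h'p[OF fS[of x]] by (simp add: mult.commute)
  qed
  have injL: "inj L" using assms(9) bij_is_inj by blast
  have injq: "inj (\<lambda>x::'a. x ^ q)" unfolding q_def by (rule frob_inj[OF ch pr])
  have "bij (\<lambda>x. L x ^ q + L \<gamma> ^ q * h (f x)) \<longleftrightarrow> inj F"
  proof
    assume "bij (\<lambda>x. L x ^ q + L \<gamma> ^ q * h (f x))"
    hence "inj (\<lambda>x. L (F x) ^ q)" unfolding GF by (rule bij_is_inj)
    hence iG: "inj (\<lambda>x. L (F x) ^ q)" .
    show "inj F"
    proof (rule injI)
      fix x y assume "F x = F y"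
      hence "L (F x) ^ q = L (F y) ^ q" by (rule arg_cong)
      thus "x = y" using injD[OF iG, of x y] by simp
    qed
  next
    assume "inj F"
    hence "inj (\<lambda>x. L (F x) ^ q)" using inj_compose[OF injq inj_compose[OF injL \<open>inj F\<close>]] by (simp add: comp_def)
    hence "inj (\<lambda>x. L x ^ q + L \<gamma> ^ q * h (f x))" unfolding GF .
    thus "bij (\<lambda>x. L x ^ q + L \<gamma> ^ q * h (f x))" by (meson bij_def finite_UNIV finite_UNIV_inj_surj)
  qed
  moreover have "inj F \<longleftrightarrow> bij_betw (\<lambda>u. u + b * h u) S S"
  proof
    assume injF: "inj F"
    hence surjF: "surj F" by (meson finite_UNIV finite_UNIV_inj_surj)
    show "bij_betw (\<lambda>u. u + b * h u) S S"
    proof (cases "b = 0")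
      case True
      thus ?thesis by (simp add: bij_betw_def)
    next
      case False
      have sub: "(\<lambda>u. u + b * h u) ` S \<subseteq> S" using S_add S_mult bS hS by auto
      have sup: "S \<subseteq> (\<lambda>u. u + b * h u) ` S"
      proof
        fix v assume v: "v \<in> S"
        obtain t where t: "t \<in> S" "t ^ q = (v - f 0) / b"
          using frob_onto[OF S_div[OF S_diff[OF v fS] bS]] by blast
        have "f (t * \<gamma>) = v" using trans[OF t(1), of 0] t(2) False by simp
        moreover obtain z where "t * \<gamma> = F z" using surjF by (metis surjD)
        ultimately have "v = f z + b * h (f z)" using fF by simp
        thus "v \<in> (\<lambda>u. u + b * h u) ` S" using fS by blast
      qed
      have eq: "(\<lambda>u. u + b * h u) ` S = S" using sub sup by blast
      hence "inj_on (\<lambda>u. u + b * h u) S" using finite_surj_inj[OF finS] by simp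
      thus ?thesis using eq by (simp add: bij_betw_def)
    qed
  next
    assume "bij_betw (\<lambda>u. u + b * h u) S S"
    hence ig: "inj_on (\<lambda>u. u + b * h u) S" by (simp add: bij_betw_def)
    show "inj F"
    proof (rule injI)
      fix x y assume e: "F x = F y"
      hence "f x + b * h (f x) = f y + b * h (f y)" using fF by metis
      hence "f x = f y" using ig fS by (meson inj_onD)
      thus "x = y" using e unfolding F_def by simp
    qed
  qed
  ultimately show ?thesis unfolding S_def q_def by simp
qed

end
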